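(* In the setting of the context: (a) If $\Pi^\rho_1 \ne \emptyset$, then the market admits $\rho$-arbitrage if and only if $\rho_1 \le 0$. (b) If $\Pi^\rho_1 = \emptyset$ and $\Pi^\rho_0 \ne \emptyset$, then the market admits $\rho$-arbitrage if and only if $\rho_1 < 0$. (c) If $\Pi^\rho_1 = \emptyset$ and $\Pi^\rho_0 = \emptyset$, then the market admits $\rho$-arbitrage.
   Context: Let $(\Omega,\mathcal{F},\mathbb{P})$ be a probability space. The market consists of a riskless asset with $S^0_0 = 1$, $S^0_1 = 1+r$, $r > -1$, and $d$ risky assets $S^1,\dots,S^d$ with constants $S^i_0 > 0$ and real-valued $\mathcal{F}$-measurable $S^i_1$. Returns: $R^i := (S^i_1 - S^i_0)/S^i_0$, $R=(R^1,\dots,R^d)$. Standing assumptions: nonredundancy (if $\theta\in\mathbb{R}^{1+d}$ and $\sum_{i=0}^d\theta^iS^i_t=0$ a.s. for $t\in\{0,1\}$ then $\theta=0$); $R^i\in L^1(\mathbb{P})$, $\mu^i:=\mathbb{E}[R^i]$; $\mu^i\neq r$ for some $i$. Portfolio $\pi\in\mathbb{R}^d$ has excess return $X_\pi:=\pi\cdot(R-r\mathbf{1})$; $\Pi_\nu := \{\pi : \mathbb{E}[X_\pi]=\nu\}$. $L$ is a Riesz space with $L^\infty\subset L\subset L^1$ containing all $X_\pi$, and $\rho:L\to(-\infty,\infty]$ is monotone, cash-invariant and positively homogeneous. $\rho_\nu:=\inf\{\rho(X_\pi):\pi\in\Pi_\nu\}\in[-\infty,\infty]$; $\Pi^\rho_\nu$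 is the set of $\pi\in\Pi_\nu$ with $\rho(X_\pi)<\infty$ and $\rho(X_\pi)\le\rho(X_{\pi'})$ for all $\pi'\in\Pi_\nu$. A portfolio $\pi$ is strictly $\rho$-preferred over $\pi'$ if $\mathbb{E}[X_\pi]\ge\mathbb{E}[X_{\pi'}]$ and $\rho(X_\pi)\le\rho(X_{\pi'})$ with at least one inequality strict. A portfolio $\pi$ is $\rho$-efficient if $\mathbb{E}[X_\pi]\ge0$ and no portfolio is strictly $\rho$-preferred over $\pi$. The market admits $\rho$-arbitrage if there are no $\rho$-efficient portfolios. *)

theory Defs
  imports "HOL-Probability.Probability"
begin

text \<open>Market model. Risky assets are indexed by a finite type 'd (so d = CARD('d) >= 1).
  S0 i > 0 initial prices, S1 i random final prices, r riskless rate.\<close>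

definition returns :: "('d \<Rightarrow> real) \<Rightarrow> ('d \<Rightarrow> 'a \<Rightarrow> real) \<Rightarrow> 'd \<Rightarrow> 'a \<Rightarrow> real" where
  "returns S0 S1 i \<omega> = (S1 i \<omega> - S0 i) / S0 i"

definition nonredundant ::
  "'a measure \<Rightarrow> real \<Rightarrow> ('d::finite \<Rightarrow> real) \<Rightarrow> ('d \<Rightarrow> 'a \<Rightarrow> real) \<Rightarrow> bool" where
  "nonredundant M r S0 S1 \<longleftrightarrow>
     (\<forall>(\<theta>0::real) (\<theta>::'d \<Rightarrow> real).
        (\<theta>0 * 1 + (\<Sum>i\<in>UNIV. \<theta> i * S0 i) = 0) \<and>
        (AE \<omega> in M. \<theta>0 * (1 + r) + (\<Sum>i\<in>UNIV. \<theta> i * S1 i \<omega>) = 0)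
        \<longrightarrow> \<theta>0 = 0 \<and> (\<forall>i. \<theta> i = 0))"

definition excess_return :: "real \<Rightarrow> ('d::finite \<Rightarrow> 'a \<Rightarrow> real) \<Rightarrow> ('d \<Rightarrow> real) \<Rightarrow> 'a \<Rightarrow> real" where
  "excess_return r R \<pi> \<omega> = (\<Sum>i\<in>UNIV. \<pi> i * (R i \<omega> - r))"

definition riesz_space_L :: "'a measure \<Rightarrow> ('a \<Rightarrow> real) set \<Rightarrow> bool" where
  "riesz_space_L M L \<longleftrightarrow>
     (\<forall>X\<in>L. integrable M X) \<and>
     (\<forall>X. X \<in> borel_measurable M \<and> (\<exists>C. AE \<omega> in M. \<bar>X \<omega>\<bar> \<le> C) \<longrightarrow> X \<in> L) \<and>
     (\<forall>X\<in>L. \<forall>Y\<in>L. (\<lambda>\<omega>. X \<omega> + Y \<omega>) \<in> L) \<and>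
     (\<forall>c::real. \<forall>X\<in>L. (\<lambda>\<omega>. c * X \<omega>) \<in> L) \<and>
     (\<forall>X\<in>L. \<forall>Y\<in>L. (\<lambda>\<omega>. max (X \<omega>) (Y \<omega>)) \<in> L)"

definition risk_functional :: "'a measure \<Rightarrow> ('a \<Rightarrow> real) set \<Rightarrow> (('a \<Rightarrow> real) \<Rightarrow> ereal) \<Rightarrow> bool" where
  "risk_functional M L \<rho> \<longleftrightarrow>
     (\<forall>X\<in>L. \<rho> X \<noteq> -\<infinity>) \<and>
     (\<forall>X\<in>L. \<forall>Y\<in>L. (AE \<omega> in M. X \<omega> \<le> Y \<omega>) \<longrightarrow> \<rho> Y \<le> \<rho> X) \<and>
     (\<forall>X\<in>L. \<forall>c::real. \<rho> (\<lambda>\<omega>. X \<omega> + c) = \<rho> X - ereal c) \<and>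
     (\<forall>X\<in>L. \<forall>t::real. t \<ge> 0 \<longrightarrow> \<rho> (\<lambda>\<omega>. t * X \<omega>) = ereal t * \<rho> X)"

definition Pi_nu :: "'a measure \<Rightarrow> real \<Rightarrow> ('d::finite \<Rightarrow> 'a \<Rightarrow> real) \<Rightarrow> real \<Rightarrow> ('d \<Rightarrow> real) set" where
  "Pi_nu M r R \<nu> = {\<pi>. integral\<^sup>L M (excess_return r R \<pi>) = \<nu>}"

definition rho_nu :: "'a measure \<Rightarrow> real \<Rightarrow> ('d::finite \<Rightarrow> 'a \<Rightarrow> real) \<Rightarrow> (('a \<Rightarrow> real) \<Rightarrow> ereal) \<Rightarrow> real \<Rightarrow> ereal" where
  "rho_nu M r R \<rho> \<nu> = (INF \<pi>\<in>Pi_nu M r R \<nu>. \<rho> (excess_return r R \<pi>))"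

definition Pi_rho :: "'a measure \<Rightarrow> real \<Rightarrow> ('d::finite \<Rightarrow> 'a \<Rightarrow> real) \<Rightarrow> (('a \<Rightarrow> real) \<Rightarrow> ereal) \<Rightarrow> real \<Rightarrow> ('d \<Rightarrow> real) set" where
  "Pi_rho M r R \<rho> \<nu> = {\<pi> \<in> Pi_nu M r R \<nu>. \<rho> (excess_return r R \<pi>) < \<infinity> \<and>
      (\<forall>\<pi>'\<in>Pi_nu M r R \<nu>. \<rho> (excess_return r R \<pi>) \<le> \<rho> (excess_return r R \<pi>'))}"

definition strictly_preferred :: "'a measure \<Rightarrow> real \<Rightarrow> ('d::finite \<Rightarrow> 'a \<Rightarrow> real) \<Rightarrow> (('a \<Rightarrow> real) \<Rightarrow> ereal) \<Rightarrow> ('d \<Rightarrow> real) \<Rightarrow> ('d \<Rightarrow> real) \<Rightarrow> bool" where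
  "strictly_preferred M r R \<rho> \<pi> \<pi>' \<longleftrightarrow>
     (let e = integral\<^sup>L M (excess_return r R \<pi>); e' = integral\<^sup>L M (excess_return r R \<pi>');
          p = \<rho> (excess_return r R \<pi>); p' = \<rho> (excess_return r R \<pi>')
      in e \<ge> e' \<and> p \<le> p' \<and> (e > e' \<or> p < p'))"

definition rho_efficient :: "'a measure \<Rightarrow> real \<Rightarrow> ('d::finite \<Rightarrow> 'a \<Rightarrow> real) \<Rightarrow> (('a \<Rightarrow> real) \<Rightarrow> ereal) \<Rightarrow> ('d \<Rightarrow> real) \<Rightarrow> bool" where
  "rho_efficient M r R \<rho> \<pi> \<longleftrightarrow>
     integral\<^sup>L M (excess_return r R \<pi>) \<ge> 0 \<and> \<not> (\<exists>\<pi>'. strictly_preferred M r R \<rho> \<pi>' \<pi>)"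

definition rho_arbitrage :: "'a measure \<Rightarrow> real \<Rightarrow> ('d::finite \<Rightarrow> 'a \<Rightarrow> real) \<Rightarrow> (('a \<Rightarrow> real) \<Rightarrow> ereal) \<Rightarrow> bool" where
  "rho_arbitrage M r R \<rho> \<longleftrightarrow> \<not> (\<exists>\<pi>. rho_efficient M r R \<rho> \<pi>)"

end

theory Submission
  imports Defs
begin

definition "SP E P x' x \<longleftrightarrow> E x' \<ge> E x \<and> P x' \<le> P x \<and> (E x' > E x \<or> P x' < P x)"
definition "EFF E P x \<longleftrightarrow> E x \<ge> (0::real) \<and> \<not>(\<exists>x'. SP E P x' x)"
definition "PR E P \<nu> = {x. E x = \<nu> \<and> P x < \<infinity> \<and> (\<forall>x'. E x' = \<nu> \<longrightarrow> P x \<le> P x')}"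
definition "RN E P \<nu> = (INF x\<in>{x. E x = \<nu>}. P x)"

lemma abs_thm:
  fixes E :: "('d \<Rightarrow> real) \<Rightarrow> real" and P :: "('d \<Rightarrow> real) \<Rightarrow> ereal"
  assumes Es: "\<And>t x. E (\<lambda>i. t * x i) = t * E x"
    and Ps: "\<And>t x. t \<ge> 0 \<Longrightarrow> P (\<lambda>i. t * x i) = ereal t * P x"
    and Pf: "\<And>x. P x \<noteq> -\<infinity>"
  shows "(PR E P 1 \<noteq> {} \<longrightarrow> ((\<not>(\<exists>x. EFF E P x)) \<longleftrightarrow> RN E P 1 \<le> 0))
       \<and> (PR E P 1 = {} \<and> PR E P 0 \<noteq> {} \<longrightarrow> ((\<not>(\<exists>x. EFF E P x)) \<longleftrightarrow> RN E P 1 < 0))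
       \<and> (PR E P 1 = {} \<and> PR E P 0 = {} \<longrightarrow> \<not>(\<exists>x. EFF E P x))"
proof -
  have sc: "(\<lambda>i. \<nu> * ((1/\<nu>) * x i)) = x" if "\<nu> \<noteq> 0" for \<nu> :: real and x :: "'d \<Rightarrow> real"
    using that by auto
  have P0: "P (\<lambda>i. 0) = 0"
    using Ps[of 0 "\<lambda>i. 0"] by (simp add: zero_ereal_def[symmetric])
  have E0: "E (\<lambda>i. 0) = 0"
    using Es[of 0 "\<lambda>i. 0"] by simp
  have Pfin: "P (\<lambda>i. t * x i) = ereal (t * c)" if "P x = ereal c" "t \<ge> 0" for t c x
    using Ps[OF that(2), of x] that by simp
  have K2: "P x \<ge> 0" if "EFF E P x" "E x = 0" for x
  proof (rule ccontr)
    assume "\<not> P x \<ge> 0"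
    then obtain c where c: "P x = ereal c" "c < 0" using Pf[of x]
      by (cases "P x") auto
    have "SP E P (\<lambda>i. 2 * x i) x"
      unfolding SP_def using c Pfin[OF c(1), of 2] Es[of 2 x] that(2) by simp
    then show False using that(1) unfolding EFF_def by blast
  qed
  have K3: "ereal (E x) * RN E P 1 \<le> P x" if "E x > 0" for x
  proof -
    let ?y = "\<lambda>i. (1 / E x) * x i"
    have "E ?y = 1" using Es[of "1/E x" x] that by simp
    hence "RN E P 1 \<le> P ?y" unfolding RN_def by (auto intro: INF_lower)
    hence "ereal (E x) * RN E P 1 \<le> ereal (E x) * P ?y"
      by (rule ereal_mult_left_mono) (use that in auto)
    also have "\<dots> = P x" using Ps[of "E x" ?y] sc[of "E x" x] that by simp
    finally show ?thesis .
  qed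
  have K1: "\<not> EFF E P x" if "PR E P 1 = {}" "E x > 0" for x
  proof
    assume eff: "EFF E P x"
    show False
    proof (cases "P x = \<infinity>")
      case True
      have "SP E P (\<lambda>i. 2 * x i) x"
        unfolding SP_def using True Es[of 2 x] that(2) by simp
      then show False using eff unfolding EFF_def by blast
    next
      case False
      then obtain c where c: "P x = ereal c" using Pf[of x] by (cases "P x") auto
      let ?y = "\<lambda>i. (1 / E x) * x i"
      have Ey: "E ?y = 1" using Es[of "1/E x" x] that by simp
      have Py: "P ?y = ereal (c / E x)" using Pfin[OF c, of "1/E x"] that by simp
      have "?y \<notin> PR E P 1" using that by simp
      then obtain z where z: "E z = 1" "\<not> P ?y \<le> P z" using Ey Py unfolding PR_def by auto
      then obtain d where d: "P z = ereal d" "d < c / E x" using Pf[of z] Py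
        by (cases "P z") auto
      have "SP E P (\<lambda>i. E x * z i) x"
        unfolding SP_def using Es[of "E x" z] z(1) Pfin[OF d(1), of "E x"] that(2) c d(2)
        by (simp add: field_simps)
      then show False using eff unfolding EFF_def by blast
    qed
  qed
  have Eff0_nonneg: "P x \<ge> 0" if "EFF E P x" "E x = 0" for x using K2 that .
  have notEff_pos: "\<not> EFF E P x" if "PR E P 1 = {}" "E x > 0" for x using K1 that by blast
  have partA: "(\<not>(\<exists>x. EFF E P x)) \<longleftrightarrow> RN E P 1 \<le> 0" if ne: "PR E P 1 \<noteq> {}"
  proof -
    obtain x1 where x1: "E x1 = 1" "P x1 < \<infinity>" "\<And>x'. E x' = 1 \<Longrightarrow> P x1 \<le> P x'"
      using ne unfolding PR_def by auto
    obtain c where c: "P x1 = ereal c" using x1(2) Pf[of x1] by (cases "P x1") auto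
    have RN1: "RN E P 1 = ereal c"
      unfolding RN_def using x1 c
      by (metis (mono_tags, lifting) INF_eqI mem_Collect_eq)
    show ?thesis
    proof
      assume arb: "\<not>(\<exists>x. EFF E P x)"
      show "RN E P 1 \<le> 0"
      proof (rule ccontr)
        assume "\<not> RN E P 1 \<le> 0"
        hence cpos: "c > 0" using RN1 by simp
        have "EFF E P x1"
          unfolding EFF_def
        proof (intro conjI notI)
          show "0 \<le> E x1" using x1 by simp
          assume "\<exists>x'. SP E P x' x1"
          then obtain y where y: "SP E P y x1" by blast
          hence Ey: "E y \<ge> 1" "P y \<le> ereal c" "E y > 1 \<or> P y < ereal c"
            unfolding SP_def using x1 c by auto
          have k: "ereal (E y) * ereal c \<le> P y" using K3[of y] Ey RN1 by simp
          have "ereal (E y * c) \<le> P y" using k by simp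
          hence "ereal (E y * c) \<le> ereal c" using Ey(2) by (rule order.trans)
          hence "E y * c \<le> c" by simp
          hence "E y \<le> 1" using cpos by (simp add: mult_le_cancel_right1)
          hence "E y = 1" using Ey by simp
          hence "P x1 \<le> P y" using x1 by simp
          thus False using Ey c \<open>E y = 1\<close> by simp
        qed
        thus False using arb by blast
      qed
    next
      assume le: "RN E P 1 \<le> 0"
      hence cle: "c \<le> 0" using RN1 by simp
      show "\<not>(\<exists>x. EFF E P x)"
      proof
        assume "\<exists>x. EFF E P x"
        then obtain x where eff: "EFF E P x" by blast
        hence Ex: "E x \<ge> 0" unfolding EFF_def by simp
        show False
        proof (cases "E x = 0")
          case True
          have "P x \<ge> 0" using K2 eff True by blast
          moreover have "P x1 \<le> 0" using c cle by simp
          ultimately have "P x1 \<le> P x" by (rule order.trans[rotated])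
          hence "SP E P x1 x" unfolding SP_def using x1(1) True by simp
          thus False using eff unfolding EFF_def by blast
        next
          case False
          hence pos: "E x > 0" using Ex by simp
          let ?y = "\<lambda>i. (E x + 1) * x1 i"
          have Ey: "E ?y = E x + 1" using Es[of "E x + 1" x1] x1 by simp
          have Py: "P ?y = ereal ((E x + 1) * c)" using Pfin[OF c, of "E x + 1"] pos by simp
          have "ereal (E x * c) \<le> P x" using K3[OF pos] RN1 by simp
          moreover have "(E x + 1) * c \<le> E x * c" using cle by (simp add: algebra_simps)
          ultimately have "P ?y \<le> P x" using Py by (metis ereal_less_eq(3) order_trans)
          hence "SP E P ?y x" unfolding SP_def using Ey by simp
          thus False using eff unfolding EFF_def by blast
        qed
      qed
    qed
  qed
  have partB: "(\<not>(\<exists>x. EFF E P x)) \<longleftrightarrow> RN E P 1 < 0" if e1: "PR E P 1 = {}" and ne0: "PR E P 0 \<noteq> {}"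
  proof -
    obtain x0 where x0: "E x0 = 0" "P x0 < \<infinity>" "\<And>x'. E x' = 0 \<Longrightarrow> P x0 \<le> P x'"
      using ne0 unfolding PR_def by auto
    have "P x0 \<ge> 0"
    proof (rule ccontr)
      assume "\<not> P x0 \<ge> 0"
      then obtain c where c: "P x0 = ereal c" "c < 0" using Pf[of x0] by (cases "P x0") auto
      have "P x0 \<le> P (\<lambda>i. 2 * x0 i)" using x0(3) Es[of 2 x0] x0(1) by simp
      thus False using Pfin[OF c(1), of 2] c by simp
    qed
    hence nn0: "P x \<ge> 0" if "E x = 0" for x using x0(3)[OF that] by simp
    show ?thesis
    proof
      assume arb: "\<not>(\<exists>x. EFF E P x)"
      show "RN E P 1 < 0"
      proof (rule ccontr)
        assume "\<not> RN E P 1 < 0"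
        hence a: "RN E P 1 \<ge> 0" by simp
        have "EFF E P (\<lambda>i. 0)"
          unfolding EFF_def
        proof (intro conjI notI)
          show "0 \<le> E (\<lambda>i. 0)" using E0 by simp
          assume "\<exists>x'. SP E P x' (\<lambda>i. 0)"
          then obtain y where y: "SP E P y (\<lambda>i. 0)" by blast
          hence Ey: "E y \<ge> 0" "P y \<le> 0" "E y > 0 \<or> P y < 0"
            unfolding SP_def using E0 P0 by auto
          show False
          proof (cases "E y = 0")
            case True thus False using nn0[OF True] Ey by simp
          next
            case False
            hence pos: "E y > 0" using Ey by simp
            have "ereal (E y) * RN E P 1 \<ge> 0" using a pos by simp
            hence Py0: "P y = 0" using K3[OF pos] Ey(2) by simp
            let ?z = "\<lambda>i. (1 / E y) * y i"
            have Ez: "E ?z = 1" using Es[of "1/E y" y] pos by simp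
            have Pz: "P ?z = 0" using Pfin[of y 0 "1/E y"] Py0 pos by (simp add: zero_ereal_def)
            have "?z \<in> PR E P 1"
              unfolding PR_def
            proof (intro CollectI conjI allI impI)
              show "E ?z = 1" by (rule Ez)
              show "P ?z < \<infinity>" using Pz by simp
              fix x' assume "E x' = 1"
              hence "RN E P 1 \<le> P x'" unfolding RN_def by (auto intro: INF_lower)
              thus "P ?z \<le> P x'" using Pz a by simp
            qed
            thus False using e1 by simp
          qed
        qed
        thus False using arb by blast
      qed
    next
      assume lt: "RN E P 1 < 0"
      then obtain x1 where x1: "E x1 = 1" "P x1 < 0" unfolding RN_def by (auto simp: INF_less_iff)
      show "\<not>(\<exists>x. EFF E P x)"
      proof
        assume "\<exists>x. EFF E P x"
        then obtain x where eff: "EFF E P x" by blast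
        hence Ex: "E x \<ge> 0" unfolding EFF_def by simp
        show False
        proof (cases "E x = 0")
          case True
          hence "SP E P x1 x" unfolding SP_def using nn0[OF True] x1 by simp
          thus False using eff unfolding EFF_def by blast
        next
          case False thus False using K1[OF e1] eff Ex by simp
        qed
      qed
    qed
  qed
  have partC: "\<not>(\<exists>x. EFF E P x)" if e1: "PR E P 1 = {}" and e0: "PR E P 0 = {}"
  proof -
    obtain x0 where x0: "E x0 = 0" "P x0 < 0"
    proof -
      have "(\<lambda>i. 0) \<notin> PR E P 0" using e0 by simp
      then obtain x' where "E x' = 0" "\<not> P (\<lambda>i. 0) \<le> P x'" unfolding PR_def using E0 P0 by auto
      thus ?thesis using that P0 by simp
    qed
    show ?thesis
    proof
      assume "\<exists>x. EFF E P x"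
      then obtain x where eff: "EFF E P x" by blast
      hence Ex: "E x \<ge> 0" unfolding EFF_def by simp
      show False
      proof (cases "E x = 0")
        case True
        have "P x0 < P x" using x0(2) K2[OF eff True] by (rule order.strict_trans2)
        hence "SP E P x0 x" unfolding SP_def using True x0(1) by simp
        thus False using eff unfolding EFF_def by blast
      next
        case False thus False using K1[OF e1] eff Ex by simp
      qed
    qed
  qed
  show ?thesis using partA partB partC by blast
qed

theorem theorem3p20:
  fixes M :: "'a measure" and r :: real
    and S0 :: "'d::finite \<Rightarrow> real" and S1 :: "'d \<Rightarrow> 'a \<Rightarrow> real"
    and L :: "('a \<Rightarrow> real) set" and \<rho> :: "('a \<Rightarrow> real) \<Rightarrow> ereal"
  defines "R \<equiv> returns S0 S1"
  assumes "prob_space M"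
    and "r > -1"
    and "\<forall>i. S0 i > 0"
    and "\<forall>i. S1 i \<in> borel_measurable M"
    and "nonredundant M r S0 S1"
    and "\<forall>i. integrable M (R i)"
    and "\<exists>i. integral\<^sup>L M (R i) \<noteq> r"
    and "riesz_space_L M L"
    and "\<forall>\<pi>. excess_return r R \<pi> \<in> L"
    and "risk_functional M L \<rho>"
  shows "(Pi_rho M r R \<rho> 1 \<noteq> {} \<longrightarrow>
            (rho_arbitrage M r R \<rho> \<longleftrightarrow> rho_nu M r R \<rho> 1 \<le> 0))
       \<and> (Pi_rho M r R \<rho> 1 = {} \<and> Pi_rho M r R \<rho> 0 \<noteq> {} \<longrightarrow>
            (rho_arbitrage M r R \<rho> \<longleftrightarrow> rho_nu M r R \<rho> 1 < 0))
       \<and> (Pi_rho M r R \<rho> 1 = {} \<and> Pi_rho M r R \<rho> 0 = {} \<longrightarrow>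
            rho_arbitrage M r R \<rho>)"
proof -
  define E where "E = (\<lambda>\<pi>. integral\<^sup>L M (excess_return r R \<pi>))"
  define P where "P = (\<lambda>\<pi>. \<rho> (excess_return r R \<pi>))"
  have exs: "excess_return r R (\<lambda>i. t * x i) = (\<lambda>\<omega>. t * excess_return r R x \<omega>)" for t x
    unfolding excess_return_def by (simp add: sum_distrib_left mult.assoc)
  have Es: "E (\<lambda>i. t * x i) = t * E x" for t x
    unfolding E_def exs by simp
  have rf: "risk_functional M L \<rho>" by fact
  have Ps: "P (\<lambda>i. t * x i) = ereal t * P x" if "t \<ge> 0" for t x
    unfolding P_def exs using rf assms(10) that unfolding risk_functional_def by blast
  have Pf: "P x \<noteq> -\<infinity>" for x
    unfolding P_def using rf assms(10) unfolding risk_functional_def by blast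
  have eq1: "Pi_rho M r R \<rho> \<nu> = PR E P \<nu>" for \<nu>
    unfolding Pi_rho_def PR_def Pi_nu_def E_def P_def by auto
  have eq2: "rho_nu M r R \<rho> \<nu> = RN E P \<nu>" for \<nu>
    unfolding rho_nu_def RN_def Pi_nu_def E_def P_def by simp
  have eq3: "rho_arbitrage M r R \<rho> \<longleftrightarrow> \<not>(\<exists>x. EFF E P x)"
    unfolding rho_arbitrage_def rho_efficient_def EFF_def SP_def strictly_preferred_def Let_def E_def P_def
    by simp
  show ?thesis unfolding eq1 eq2 eq3 using abs_thm[of E P, OF Es Ps Pf] by blast
qed

end
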